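(* Let $n$ be a positive integer. Define the graph $G=(V,E)$ with vertex set $V=\{\{i,j\}: i,j\in[n],\ i\neq j\}$ and edge set $E=\{(\{i,j\},\{j,k\}): i,j,k\in[n] \text{ pairwise distinct}\}$. Then there exists a subgraph $G'=(V,E')$ with $E'\subseteq E$ satisfying $|E'|\le n^2$ and $$\operatorname{dist}_{G'}(v_1,v_2)\le 4(\log_2(n)+1)\quad\text{for all } v_1,v_2\in V.$$
   Context: $\operatorname{dist}_{G'}$ denotes the shortest-path distance in $G'$. *)

theory Defs
  imports Main "HOL-Library.Extended_Nat"
begin

definition pairV :: "nat \<Rightarrow> nat set set" where
  "pairV n = {{i, j} | i j. i \<in> {1..n} \<and> j \<in> {1..n} \<and> i \<noteq> j}"

definition pairE :: "nat \<Rightarrow> nat set set set" where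
  "pairE n = {{{i, j}, {j, k}} | i j k. i \<in> {1..n} \<and> j \<in> {1..n} \<and> k \<in> {1..n}
                 \<and> i \<noteq> j \<and> j \<noteq> k \<and> i \<noteq> k}"

definition is_walk :: "'a set set \<Rightarrow> 'a list \<Rightarrow> bool" where
  "is_walk F xs = (xs \<noteq> [] \<and> (\<forall>i < length xs - 1. {xs ! i, xs ! Suc i} \<in> F))"

text \<open>Shortest-path distance (infinity if no path).\<close>
definition graph_dist :: "'a set set \<Rightarrow> 'a \<Rightarrow> 'a \<Rightarrow> enat" where
  "graph_dist F u v = (INF xs \<in> {xs. is_walk F xs \<and> hd xs = u \<and> last xs = v}. enat (length xs - 1))"

end

theory Submission
  imports Defs Complex_Main
begin

lemma walk_single[simp]: "is_walk F [x]"
  by (simp add: is_walk_def)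

lemma walk_cons2[simp]: "is_walk F (x#y#xs) \<longleftrightarrow> {x,y} \<in> F \<and> is_walk F (y#xs)"
  unfolding is_walk_def by (simp add: All_less_Suc2)

lemma walk_append: "is_walk F (xs@[y]) \<Longrightarrow> is_walk F (y#ys) \<Longrightarrow> is_walk F (xs@y#ys)"
proof (induction xs)
  case Nil
  then show ?case by simp
next
  case (Cons a xs)
  then show ?case by (cases xs) auto
qed

lemma walk_rev: "is_walk F (x#xs) \<Longrightarrow> is_walk F (rev (x#xs))"
proof (induction xs arbitrary: x)
  case Nil
  then show ?case by simp
next
  case (Cons y xs)
  have "is_walk F (rev xs @ [y])" using Cons by simp
  moreover have "is_walk F [y,x]" using Cons.prems by (simp add: insert_commute)
  ultimately show ?case using walk_append[of F "rev xs" y "[x]"] by simp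
qed

lemma dist_le: "is_walk F xs \<Longrightarrow> hd xs = u \<Longrightarrow> last xs = v \<Longrightarrow> graph_dist F u v \<le> enat (length xs - 1)"
  unfolding graph_dist_def by (rule INF_lower) auto

definition ff :: "nat \<times> nat \<Rightarrow> nat set set" where
  "ff p = (if fst p = 1 then {{1,2},{1,snd p}} else {{1,fst p},{fst p, snd p}})"

lemma pairV_ord: "v \<in> pairV n \<Longrightarrow> \<exists>i j. v = {i,j} \<and> i \<in> {1..n} \<and> j \<in> {1..n} \<and> i < j"
  unfolding pairV_def
proof (clarify)
  fix i j assume h: "i \<in> {1..n}" "j \<in> {1..n}" "i \<noteq> j"
  show "\<exists>i' j'. {i,j} = {i',j'} \<and> i' \<in> {1..n} \<and> j' \<in> {1..n} \<and> i' < j'"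
  proof (cases "i < j")
    case True then show ?thesis using h by blast
  next
    case False then have "j < i" using h by simp
    then show ?thesis using h by (intro exI[of _ j] exI[of _ i]) (auto simp: insert_commute)
  qed
qed

lemma pairE_I: "i\<in>{1..n} \<Longrightarrow> j\<in>{1..n} \<Longrightarrow> k\<in>{1..n} \<Longrightarrow> i\<noteq>j \<Longrightarrow> j\<noteq>k \<Longrightarrow> i\<noteq>k
   \<Longrightarrow> {{i,j},{j,k}} \<in> pairE n"
  unfolding pairE_def by blast

lemma ffI: "a\<in>{1..n} \<Longrightarrow> b\<in>{1..n} \<Longrightarrow> ff (a,b) \<in> ff ` ({1..n}\<times>{1..n})"
  by blast

lemma route:
  assumes "v \<in> pairV n"
  shows "\<exists>xs. is_walk (pairE n \<inter> ff ` ({1..n}\<times>{1..n})) xs \<and> hd xs = v \<and> last xs = {1,2} \<and> length xs \<le> 3"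
proof -
  let ?F = "pairE n \<inter> ff ` ({1..n}\<times>{1..n})"
  obtain i j where ij: "v = {i,j}" "i \<in> {1..n}" "j \<in> {1..n}" "i < j"
    using pairV_ord[OF assms] by blast
  have n2: "2 \<in> {1..n}" using ij by auto
  have n1: "1 \<in> {1..n}" using ij by auto
  show ?thesis
  proof (cases "i = 1")
    case True
    show ?thesis
    proof (cases "j = 2")
      case True
      then show ?thesis using \<open>i=1\<close> ij by (intro exI[of _ "[v]"]) auto
    next
      case False
      have "{{2,1},{1,j}} \<in> pairE n" using ij False \<open>i=1\<close> n2
        by (intro pairE_I) auto
      moreover have "ff (1,j) \<in> ff ` ({1..n}\<times>{1..n})" using ij n1 by (intro ffI) auto
      moreover have "ff (1,j) = {{2,1},{1,j}}" by (simp add: ff_def insert_commute)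
      moreover have "{{2,1},{1,j}} = {v,{1,2}}" using ij \<open>i=1\<close> by (simp add: insert_commute)
      ultimately have "{v,{1,2}} \<in> ?F" by simp
      then show ?thesis by (intro exI[of _ "[v,{1,2}]"]) simp
    qed
  next
    case False
    show ?thesis
    proof (cases "i = 2")
      case True
      have "{{1,2},{2,j}} \<in> pairE n" using ij \<open>i=2\<close> n1
        by (intro pairE_I) auto
      moreover have "ff (2,j) \<in> ff ` ({1..n}\<times>{1..n})" using ij n2 by (intro ffI) auto
      moreover have "ff (2,j) = {{1,2},{2,j}}" by (simp add: ff_def)
      moreover have "{{1,2},{2,j}} = {v,{1,2}}" using ij \<open>i=2\<close> by (simp add: insert_commute)
      ultimately have "{v,{1,2}} \<in> ?F" by simp
      then show ?thesis by (intro exI[of _ "[v,{1,2}]"]) simp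
    next
      case False2: False
      have "{{1,i},{i,j}} \<in> pairE n" using ij False n1
        by (intro pairE_I) auto
      moreover have "ff (i,j) \<in> ff ` ({1..n}\<times>{1..n})" using ij by (intro ffI) auto
      moreover have "ff (i,j) = {{1,i},{i,j}}" using False by (simp add: ff_def)
      moreover have "{{1,i},{i,j}} = {v,{1,i}}" using ij by (simp add: insert_commute)
      ultimately have e1: "{v,{1,i}} \<in> ?F" by simp
      have "{{2,1},{1,i}} \<in> pairE n" using ij False False2 n2
        by (intro pairE_I) auto
      moreover have "ff (1,i) \<in> ff ` ({1..n}\<times>{1..n})" using ij n1 by (intro ffI) auto
      moreover have "ff (1,i) = {{2,1},{1,i}}" by (simp add: ff_def insert_commute)
      moreover have "{{2,1},{1,i}} = {{1,i},{1,2}}" by (simp add: insert_commute)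
      ultimately have e2: "{{1,i},{1,2}} \<in> ?F" by simp
      show ?thesis using e1 e2 by (intro exI[of _ "[v,{1,i},{1,2}]"]) simp
    qed
  qed
qed

theorem lemma9:
  fixes n :: nat
  assumes "n > 0"
  shows "\<exists>E'. E' \<subseteq> pairE n \<and> card E' \<le> n ^ 2 \<and>
    (\<forall>v1 \<in> pairV n. \<forall>v2 \<in> pairV n.
       graph_dist E' v1 v2 \<noteq> \<infinity> \<and>
       real (the_enat (graph_dist E' v1 v2)) \<le> 4 * (log 2 (real n) + 1))"
proof (intro exI[of _ "pairE n \<inter> ff ` ({1..n}\<times>{1..n})"] conjI ballI)
  let ?F = "pairE n \<inter> ff ` ({1..n}\<times>{1..n})"
  show "?F \<subseteq> pairE n" by blast
  have "card ?F \<le> card (ff ` ({1..n}\<times>{1..n}))" by (intro card_mono) auto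
  also have "\<dots> \<le> card ({1..n}\<times>{1..n})" by (rule card_image_le) auto
  finally show "card ?F \<le> n^2" by (simp add: power2_eq_square)
  fix v1 v2 assume v: "v1 \<in> pairV n" "v2 \<in> pairV n"
  obtain xs where xs: "is_walk ?F xs" "hd xs = v1" "last xs = {1,2}" "length xs \<le> 3"
    using route[OF v(1)] by blast
  obtain ys where ys: "is_walk ?F ys" "hd ys = v2" "last ys = {1,2}" "length ys \<le> 3"
    using route[OF v(2)] by blast
  define xs' where "xs' = butlast xs"
  define t where "t = rev (butlast ys)"
  have xsne: "xs \<noteq> []" "ys \<noteq> []" using xs ys by (auto simp: is_walk_def)
  have xs': "xs = xs' @ [{1,2}]" using xsne xs(3) unfolding xs'_def
    by (metis append_butlast_last_id)
  have rv: "rev ys = {1,2} # t" using xsne ys(3) unfolding t_def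
    by (metis append_butlast_last_id rev.simps(2) rev_rev_ident)
  have r: "is_walk ?F (rev ys)" using ys(1) xsne walk_rev by (metis list.exhaust)
  have w: "is_walk ?F (xs' @ {1,2} # t)"
    using walk_append[of ?F xs' "{1,2}" t] xs xs' r rv by simp
  have eq: "xs' @ {1,2} # t = xs @ t" using xs' by simp
  have h: "hd (xs' @ {1,2} # t) = v1" unfolding eq using xs xsne by simp
  have l: "last (xs' @ {1,2} # t) = v2"
  proof -
    have "last (xs' @ {1,2} # t) = last (rev ys)" using rv by simp
    also have "\<dots> = hd ys" using xsne by (simp add: last_rev)
    finally show ?thesis using ys by simp
  qed
  have lt: "length t \<le> 2" using ys unfolding t_def by simp
  have len: "length (xs' @ {1,2} # t) - 1 \<le> 4" using xs xs' lt by simp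
  have d: "graph_dist ?F v1 v2 \<le> enat 4"
    using dist_le[OF w h l] len by (meson enat_ord_simps(1) order_trans)
  show ninf: "graph_dist ?F v1 v2 \<noteq> \<infinity>"
  proof
    assume "graph_dist ?F v1 v2 = \<infinity>"
    with d have "(\<infinity>::enat) \<le> enat 4" by simp
    then show False by simp
  qed
  then obtain k where k1: "graph_dist ?F v1 v2 = enat k"
    by (cases "graph_dist ?F v1 v2") auto
  have k: "graph_dist ?F v1 v2 = enat k" "k \<le> 4" using k1 d by auto
  have "0 \<le> log 2 (real n)" using assms by simp
  then show "real (the_enat (graph_dist ?F v1 v2)) \<le> 4 * (log 2 (real n) + 1)"
    using k by simp
qed

end
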